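(* For every $u\in V$, $\Pr(E_u)=\mathcal{O}\left(\log^{-1} n\right)$ as $n\to\infty$, with the implied constant independent of $u$; here $E_u$ is the event that there exists a C3 rooted at $u$ whose type is one of the seven words in $\{s,w\}^3\setminus\{(s,s,s)\}$ (i.e., containing at least one $w$).
   Context: For an integer $n\ge1$, the $n$-octahedral graph $G'_n=(V,E')$ is the undirected graph with vertex set $V=\{u\in\mathbb{Z}^3:|u_1|+|u_2|+|u_3|=n\}$ and edge set $E'=\{\{v,w\}\subset V: v\neq w,\ |v_i-w_i|\le 1 \text{ for all } i=1,2,3\}$. For $u,v\in V$, $d_{uv}$ denotes the shortest-path distance in $G'_n$, and $Z_u=\left(\sum_{w\in V\setminus\{u\}} d_{uw}^{-2}\right)^{-1}$. The OSW random graph $G_n=(V,E)$ is the directed graph in which, for every $\{u,v\}\in E'$, both $(u,v),(v,u)\in E$, and in addition each vertex $u\in V$, independently of the others, chooses one vertex $v\in V\setminus\{u\}$ with probability $Z_u d_{uv}^{-2}$ and the long-range edge $(u,v)$ is added; $C_{uv}$ denotes the event that $u$ chooses $v$. For an ordered pair $(x,y)$ of distinct vertices, say $(x,y)$ is of type $s$ if $\{x,y\}\in E'$, and of type $w$ if $d_{xy}\ge2$ and $C_{xy}$ occurs. A C3 rooted at $u$ of type $(t_1,t_2,t_3)\in\{s,w\}^3$ is a triple $(u,a,b)$ of pairwise distinct vertices such that $(u,a)$ is of type $t_1$, $(a,b)$ is of type $t_2$ and $(b,u)$ is of type $t_3$. *)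

theory Defs
  imports "HOL-Probability.Probability"
begin

type_synonym vtx = "int \<times> int \<times> int"

definition Vn :: "nat \<Rightarrow> vtx set" where
  "Vn n = {(x, y, z). \<bar>x\<bar> + \<bar>y\<bar> + \<bar>z\<bar> = int n}"

definition adj :: "nat \<Rightarrow> vtx \<Rightarrow> vtx \<Rightarrow> bool" where
  "adj n v w \<longleftrightarrow> v \<in> Vn n \<and> w \<in> Vn n \<and> v \<noteq> w \<and>
     \<bar>fst v - fst w\<bar> \<le> 1 \<and> \<bar>fst (snd v) - fst (snd w)\<bar> \<le> 1 \<and>
     \<bar>snd (snd v) - snd (snd w)\<bar> \<le> 1"

definition gdist :: "nat \<Rightarrow> vtx \<Rightarrow> vtx \<Rightarrow> nat" where
  "gdist n u v = (LEAST k. \<exists>xs. length xs = Suc k \<and> hd xs = u \<and> last xs = v \<and>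
      set xs \<subseteq> Vn n \<and> (\<forall>i<k. adj n (xs ! i) (xs ! Suc i)))"

definition Zc :: "nat \<Rightarrow> vtx \<Rightarrow> real" where
  "Zc n u = inverse (\<Sum>w\<in>Vn n - {u}. 1 / (real (gdist n u w))\<^sup>2)"

definition choice_pmf :: "nat \<Rightarrow> vtx \<Rightarrow> vtx pmf" where
  "choice_pmf n u = embed_pmf (\<lambda>v. if v \<in> Vn n \<and> v \<noteq> u
       then Zc n u / (real (gdist n u v))\<^sup>2 else 0)"

text \<open>The independent choices of all vertices: a random function c, where c u is
  the vertex chosen by u (C_uv is the event c u = v).\<close>
definition OSW :: "nat \<Rightarrow> (vtx \<Rightarrow> vtx) pmf" where
  "OSW n = Pi_pmf (Vn n) (0, 0, 0) (choice_pmf n)"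

datatype etype = S | W

definition of_type :: "nat \<Rightarrow> (vtx \<Rightarrow> vtx) \<Rightarrow> vtx \<Rightarrow> vtx \<Rightarrow> etype \<Rightarrow> bool" where
  "of_type n c x y t = (case t of
      S \<Rightarrow> adj n x y
    | W \<Rightarrow> x \<in> Vn n \<and> y \<in> Vn n \<and> x \<noteq> y \<and> gdist n x y \<ge> 2 \<and> c x = y)"

definition E_ev :: "nat \<Rightarrow> vtx \<Rightarrow> (vtx \<Rightarrow> vtx) set" where
  "E_ev n u = {c. \<exists>a b t1 t2 t3. a \<in> Vn n \<and> b \<in> Vn n \<and>
      u \<noteq> a \<and> u \<noteq> b \<and> a \<noteq> b \<and> W \<in> {t1, t2, t3} \<and>
      of_type n c u a t1 \<and> of_type n c a b t2 \<and> of_type n c b u t3}"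

end

theory Submission
  imports Defs "HOL-Analysis.Harmonic_Numbers"
begin


lemma finite_Vn: "finite (Vn n)"
proof -
  have "Vn n \<subseteq> {-int n..int n} \<times> {-int n..int n} \<times> {-int n..int n}"
    by (auto simp: Vn_def)
  then show ?thesis by (rule finite_subset) auto
qed

lemma path_le:
  fixes f :: "nat \<Rightarrow> vtx"
  assumes "f 0 = u" "f k = w" "\<And>t. t \<le> k \<Longrightarrow> f t \<in> Vn n"
    "\<And>t. t < k \<Longrightarrow> adj n (f t) (f (Suc t))"
  shows "gdist n u w \<le> k"
proof -
  let ?xs = "map f [0..<Suc k]"
  have "length ?xs = Suc k \<and> hd ?xs = u \<and> last ?xs = w \<and>
      set ?xs \<subseteq> Vn n \<and> (\<forall>i<k. adj n (?xs ! i) (?xs ! Suc i))"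
    using assms by (auto simp: hd_map last_map nth_append simp del: upt_Suc)
  then show ?thesis unfolding gdist_def by (intro Least_le) blast
qed

lemma path_pos:
  fixes f :: "nat \<Rightarrow> vtx"
  assumes "f 0 = u" "f k = w" "\<And>t. t \<le> k \<Longrightarrow> f t \<in> Vn n"
    "\<And>t. t < k \<Longrightarrow> adj n (f t) (f (Suc t))" "u \<noteq> w"
  shows "gdist n u w > 0"
proof -
  let ?P = "\<lambda>k. \<exists>xs. length xs = Suc k \<and> hd xs = u \<and> last xs = w \<and>
      set xs \<subseteq> Vn n \<and> (\<forall>i<k. adj n (xs ! i) (xs ! Suc i))"
  let ?xs = "map f [0..<Suc k]"
  have "?P k"
    using assms by (intro exI[of _ ?xs]) (auto simp: hd_map last_map nth_append simp del: upt_Suc)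
  then have "?P (Least ?P)" by (rule LeastI)
  then obtain xs where "length xs = Suc (Least ?P)" "hd xs = u" "last xs = w" by blast
  moreover have "Least ?P \<noteq> 0"
  proof
    assume "Least ?P = 0"
    with calculation obtain x where "xs = [x]" by (cases xs) auto
    with calculation assms(5) show False by auto
  qed
  ultimately show ?thesis unfolding gdist_def by simp
qed




definition sg :: "int \<Rightarrow> int" where "sg v = (if v \<ge> 0 then 1 else -1)"

lemma sg_abs: "sg v * \<bar>v\<bar> = v" by (simp add: sg_def)
lemma abs_sg_mult: "m \<ge> 0 \<Longrightarrow> \<bar>sg v * m\<bar> = m" by (simp add: sg_def)
lemma sg_cancel: "sg v * a = sg v * b \<longleftrightarrow> a = b" by (simp add: sg_def)
lemma abs_sg_diff: "\<bar>sg v * a - sg v * b\<bar> = \<bar>a - b\<bar>" 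
  by (simp add: sg_def abs_minus_commute)
lemma sg_nz: "sg v \<noteq> 0" by (simp add: sg_def)

lemma core_lower:
  fixes \<sigma> :: "vtx \<Rightarrow> vtx" and X Y Z :: int
  assumes inj: "inj \<sigma>"
    and hV: "\<And>X Y Z. \<sigma> (X,Y,Z) \<in> Vn n \<longleftrightarrow> \<bar>X\<bar>+\<bar>Y\<bar>+\<bar>Z\<bar> = int n"
    and hA: "\<And>X Y Z X' Y' Z'. (X,Y,Z) \<noteq> (X',Y',Z') \<Longrightarrow> \<bar>X-X'\<bar> \<le> 1 \<Longrightarrow> \<bar>Y-Y'\<bar> \<le> 1 \<Longrightarrow>
        \<bar>Z-Z'\<bar> \<le> 1 \<Longrightarrow> \<sigma>(X,Y,Z) \<in> Vn n \<Longrightarrow> \<sigma>(X',Y',Z') \<in> Vn n \<Longrightarrow>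
        adj n (\<sigma>(X,Y,Z)) (\<sigma>(X',Y',Z'))"
    and sum: "\<bar>X\<bar>+\<bar>Y\<bar>+\<bar>Z\<bar> = int n"
  shows "ln (real (nat \<bar>X\<bar>) + 1) \<le> (\<Sum>w\<in>Vn n - {\<sigma>(X,Y,Z)}. 1/(real (gdist n (\<sigma>(X,Y,Z)) w))^2)"
proof -
  define P where "P = nat \<bar>X\<bar>"
  define u where "u = \<sigma>(X,Y,Z)"
  define g where "g i j = \<sigma>(sg X * (\<bar>X\<bar> - int i - int j), sg Y * (\<bar>Y\<bar> + int i), sg Z * (\<bar>Z\<bar> + int j))" for i j :: nat
  define wk where "wk = (\<lambda>(k::nat,a::nat). g a (k - a))"
  define I where "I = Sigma {1..P} (\<lambda>k. {0..k})"
  have g00: "g 0 0 = u" by (simp add: g_def u_def sg_abs)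
  have gV: "g i j \<in> Vn n" if "i + j \<le> P" for i j
    using that sum unfolding g_def hV P_def by (simp add: abs_sg_mult)
  have gadj1: "adj n (g t j) (g (Suc t) j)" if "Suc t + j \<le> P" for t j
  proof -
    have "g t j \<in> Vn n" "g (Suc t) j \<in> Vn n" using that by (auto intro: gV)
    then show ?thesis unfolding g_def by (intro hA) (auto simp: sg_cancel abs_sg_diff sg_nz)
  qed
  have gadj2: "adj n (g i t) (g i (Suc t))" if "i + Suc t \<le> P" for t i
  proof -
    have "g i t \<in> Vn n" "g i (Suc t) \<in> Vn n" using that by (auto intro: gV)
    then show ?thesis unfolding g_def by (intro hA) (auto simp: sg_cancel abs_sg_diff sg_nz)
  qed
  have dist: "1 \<le> gdist n u (wk (k,a)) \<and> gdist n u (wk (k,a)) \<le> k \<and> u \<noteq> wk (k,a)" if "(k,a) \<in> I" for k a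
  proof -
    from that have k: "1 \<le> k" "k \<le> P" "a \<le> k" by (auto simp: I_def)
    define f where "f t = (if t \<le> a then g t 0 else g a (t - a))" for t
    have f0: "f 0 = u" by (simp add: f_def g00)
    have fk: "f k = wk (k,a)" using k by (auto simp: f_def wk_def)
    have fV: "f t \<in> Vn n" if "t \<le> k" for t using that k by (auto simp: f_def intro!: gV)
    have fA: "adj n (f t) (f (Suc t))" if "t < k" for t
    proof (cases "Suc t \<le> a")
      case True then show ?thesis using that k by (auto simp: f_def intro!: gadj1)
    next
      case False
      then have "Suc t - a = Suc (t - a)" by auto
      have e1: "f t = g a (t - a)" using False by (cases "t = a") (auto simp: f_def)
      have e2: "f (Suc t) = g a (Suc (t - a))" using False \<open>Suc t - a = Suc (t - a)\<close> by (simp add: f_def)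
      have "a + Suc (t - a) \<le> P" using False \<open>t < k\<close> k by linarith
      then show ?thesis unfolding e1 e2 by (rule gadj2)
    qed
    have ne: "u \<noteq> wk (k,a)"
    proof
      assume "u = wk (k,a)"
      then have "X = sg X * (\<bar>X\<bar> - int a - int (k - a))"
        using inj unfolding u_def wk_def g_def by (auto dest: injD)
      then have "sg X * \<bar>X\<bar> = sg X * (\<bar>X\<bar> - int a - int (k - a))" by (simp add: sg_abs)
      then have "\<bar>X\<bar> = \<bar>X\<bar> - int a - int (k - a)" by (simp only: sg_cancel)
      with k show False by auto
    qed
    show ?thesis
      using path_le[OF f0 fk fV fA] path_pos[OF f0 fk fV fA ne] ne by auto
  qed
  have injw: "inj_on wk I"
  proof (rule inj_onI)
    fix p q assume p: "p \<in> I" and q: "q \<in> I" and e: "wk p = wk q"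
    obtain k a where pk: "p = (k,a)" by (cases p)
    obtain k' a' where qk: "q = (k',a')" by (cases q)
    have ak: "a \<le> k" "a' \<le> k'" using p q pk qk by (auto simp: I_def)
    from e have "sg X * (\<bar>X\<bar> - int a - int (k - a)) = sg X * (\<bar>X\<bar> - int a' - int (k' - a')) \<and>
       sg Y * (\<bar>Y\<bar> + int a) = sg Y * (\<bar>Y\<bar> + int a')"
      unfolding pk qk wk_def g_def using inj by (auto dest: injD)
    then have "int a + int (k - a) = int a' + int (k' - a')" "a = a'" by (auto simp: sg_nz)
    with ak have "k = k'" "a = a'" by auto
    then show "p = q" using pk qk by simp
  qed
  have sub: "wk ` I \<subseteq> Vn n - {u}"
  proof
    fix w assume "w \<in> wk ` I"
    then obtain k a where ka: "(k,a) \<in> I" "w = wk (k,a)" by auto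
    then have "a + (k - a) \<le> P" by (auto simp: I_def)
    then have "w \<in> Vn n" using ka by (simp add: wk_def gV)
    moreover have "w \<noteq> u" using dist[OF ka(1)] ka(2) by auto
    ultimately show "w \<in> Vn n - {u}" by simp
  qed
  have "ln (real P + 1) \<le> harm P" by (rule ln_le_harm)
  also have "harm P = (\<Sum>k\<in>{1..P}. 1 / real k)" by (simp add: harm_def inverse_eq_divide)
  also have "\<dots> \<le> (\<Sum>k\<in>{1..P}. \<Sum>a\<in>{0..k}. 1 / (real k)^2)"
  proof (rule sum_mono)
    fix k assume k: "k \<in> {1..P}"
    have "(\<Sum>a\<in>{0..k}. 1 / (real k)^2) = (real k + 1) / (real k)^2" by simp
    also have "\<dots> \<ge> 1 / real k" using k by (simp add: power2_eq_square field_simps)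
    finally show "1 / real k \<le> (\<Sum>a\<in>{0..k}. 1 / (real k)^2)" .
  qed
  also have "\<dots> = (\<Sum>(k,a)\<in>I. 1 / (real k)^2)" unfolding I_def by (rule sum.Sigma) auto
  also have "\<dots> \<le> (\<Sum>i\<in>I. 1/(real (gdist n u (wk i)))^2)"
  proof (rule sum_mono)
    fix i assume i: "i \<in> I"
    obtain k a where ka: "i = (k,a)" by (cases i)
    have "1 \<le> gdist n u (wk (k,a))" "gdist n u (wk (k,a)) \<le> k" using dist i ka by auto
    then have "1 / (real k)^2 \<le> 1/(real (gdist n u (wk (k,a))))^2"
      by (intro divide_left_mono power_mono) auto
    then show "(case i of (k,a) \<Rightarrow> 1 / (real k)^2) \<le> 1/(real (gdist n u (wk i)))^2"
      using ka by simp
  qed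
  also have "\<dots> = (\<Sum>w\<in>wk ` I. 1/(real (gdist n u w))^2)"
    by (rule sum.reindex[OF injw, symmetric, unfolded comp_def])
  also have "\<dots> \<le> (\<Sum>w\<in>Vn n - {u}. 1/(real (gdist n u w))^2)"
    by (rule sum_mono2[OF _ sub]) (auto intro: finite_Vn)
  finally show ?thesis unfolding P_def u_def .
qed



definition Ssum :: "nat \<Rightarrow> vtx \<Rightarrow> real" where
  "Ssum n u = (\<Sum>w\<in>Vn n - {u}. 1 / (real (gdist n u w))\<^sup>2)"

lemma Ssum_lower:
  assumes "u \<in> Vn n"
  shows "ln (real n / 3 + 1) \<le> Ssum n u"
proof -
  obtain x y z where u: "u = (x,y,z)" by (cases u) auto
  have s: "\<bar>x\<bar> + \<bar>y\<bar> + \<bar>z\<bar> = int n" using assms u by (simp add: Vn_def)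
  have key: "ln (real n / 3 + 1) \<le> ln (real (nat m) + 1)" if "3 * m \<ge> int n" "m \<ge> 0" for m :: int
  proof -
    have "real n / 3 \<le> real (nat m)" using that by linarith
    then show ?thesis by (intro ln_mono) auto
  qed
  consider "\<bar>x\<bar> \<ge> \<bar>y\<bar> \<and> \<bar>x\<bar> \<ge> \<bar>z\<bar>" | "\<bar>y\<bar> \<ge> \<bar>x\<bar> \<and> \<bar>y\<bar> \<ge> \<bar>z\<bar>" | "\<bar>z\<bar> \<ge> \<bar>x\<bar> \<and> \<bar>z\<bar> \<ge> \<bar>y\<bar>" by linarith
  then show ?thesis
  proof cases
    case 1
    have "ln (real (nat \<bar>x\<bar>) + 1) \<le> Ssum n u"
      unfolding Ssum_def u
      using core_lower[of "id" n x y z] s by (auto simp: Vn_def adj_def)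
    moreover have "ln (real n / 3 + 1) \<le> ln (real (nat \<bar>x\<bar>) + 1)" using 1 s by (intro key) auto
    ultimately show ?thesis by linarith
  next
    case 2
    have "ln (real (nat \<bar>y\<bar>) + 1) \<le> Ssum n u"
      unfolding Ssum_def u
      using core_lower[of "\<lambda>(X,Y,Z). (Y,X,Z)" n y x z] s
      by (auto simp: Vn_def adj_def inj_def algebra_simps)
    moreover have "ln (real n / 3 + 1) \<le> ln (real (nat \<bar>y\<bar>) + 1)" using 2 s by (intro key) auto
    ultimately show ?thesis by linarith
  next
    case 3
    have "ln (real (nat \<bar>z\<bar>) + 1) \<le> Ssum n u"
      unfolding Ssum_def u
      using core_lower[of "\<lambda>(X,Y,Z). (Z,Y,X)" n z y x] s
      by (auto simp: Vn_def adj_def inj_def algebra_simps)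
    moreover have "ln (real n / 3 + 1) \<le> ln (real (nat \<bar>z\<bar>) + 1)" using 3 s by (intro key) auto
    ultimately show ?thesis by linarith
  qed
qed




lemma Ssum_pos: "n \<ge> 1 \<Longrightarrow> u \<in> Vn n \<Longrightarrow> 0 < ln (real n / 3 + 1)"
  by (intro ln_gt_zero) auto

definition Zm :: "nat \<Rightarrow> real" where "Zm n = 1 / ln (real n / 3 + 1)"

lemma Zc_eq: "Zc n u = 1 / Ssum n u"
  by (simp add: Zc_def Ssum_def inverse_eq_divide)

lemma Zc_le:
  assumes "n \<ge> 1" "u \<in> Vn n" shows "Zc n u \<le> Zm n" "0 \<le> Zc n u"
proof -
  have l: "0 < ln (real n / 3 + 1)" "ln (real n / 3 + 1) \<le> Ssum n u"
    using Ssum_pos[OF assms] Ssum_lower[OF assms(2)] by auto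
  have "0 < Ssum n u" using l by linarith
  then show "Zc n u \<le> Zm n" unfolding Zc_eq Zm_def using l by (intro divide_left_mono mult_pos_pos) linarith+
  show "0 \<le> Zc n u" using l \<open>0 < Ssum n u\<close> unfolding Zc_eq by simp
qed

lemma pmf_choice:
  assumes "n \<ge> 1" "u \<in> Vn n"
  shows "pmf (choice_pmf n u) v = (if v \<in> Vn n \<and> v \<noteq> u then Zc n u / (real (gdist n u v))\<^sup>2 else 0)"
proof -
  define f where "f v = (if v \<in> Vn n \<and> v \<noteq> u then Zc n u / (real (gdist n u v))\<^sup>2 else 0)" for v
  have nn: "0 \<le> f v" for v using Zc_le[OF assms] by (simp add: f_def)
  have Spos: "0 < Ssum n u" using Ssum_pos[OF assms] Ssum_lower[OF assms(2)] by linarith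
  have "(\<integral>\<^sup>+x. ennreal (f x) \<partial>count_space UNIV) = (\<Sum>x\<in>Vn n - {u}. ennreal (f x))"
    by (rule nn_integral_count_space') (auto simp: f_def finite_Vn)
  also have "\<dots> = ennreal (\<Sum>x\<in>Vn n - {u}. f x)" using nn by simp
  also have "(\<Sum>x\<in>Vn n - {u}. f x) = Zc n u * Ssum n u"
    unfolding Ssum_def sum_distrib_left by (intro sum.cong) (auto simp: f_def)
  also have "\<dots> = 1" using Spos by (simp add: Zc_eq)
  finally have int: "(\<integral>\<^sup>+x. ennreal (f x) \<partial>count_space UNIV) = 1" by simp
  have "choice_pmf n u = embed_pmf f" unfolding choice_pmf_def f_def ..
  then show ?thesis using pmf_embed_pmf[of f v, OF nn int] by (simp add: f_def)
qed

lemma pmf_le_Zm: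
  assumes "n \<ge> 1" "u \<in> Vn n"
  shows "pmf (choice_pmf n u) v \<le> Zm n"
proof -
  have z: "0 \<le> Zc n u" "Zc n u \<le> Zm n" using Zc_le[OF assms] by auto
  have "Zc n u / (real (gdist n u v))\<^sup>2 \<le> Zc n u"
  proof (cases "gdist n u v = 0")
    case False
    then have "1 \<le> (real (gdist n u v))\<^sup>2" by (simp add: one_le_power)
    then show ?thesis using z by (simp add: divide_le_eq mult_le_cancel_left1)
  qed (use z in simp)
  then show ?thesis using z by (simp add: pmf_choice[OF assms])
qed

lemma sum_pmf_le1: "finite A \<Longrightarrow> sum (pmf M) A \<le> 1"
  by (metis measure_measure_pmf_finite measure_pmf.prob_le_1)

definition Bs :: "nat \<Rightarrow> vtx \<Rightarrow> vtx \<Rightarrow> etype \<Rightarrow> vtx set" where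
  "Bs n x y t = (case t of S \<Rightarrow> (if adj n x y then UNIV else {})
     | W \<Rightarrow> (if x \<in> Vn n \<and> y \<in> Vn n \<and> x \<noteq> y \<and> gdist n x y \<ge> 2 then {y} else {}))"

lemma of_type_Bs: "of_type n c x y t \<longleftrightarrow> c x \<in> Bs n x y t"
  by (cases t) (auto simp: of_type_def Bs_def)

definition q :: "nat \<Rightarrow> vtx \<Rightarrow> vtx \<Rightarrow> etype \<Rightarrow> real" where
  "q n x y t = measure_pmf.prob (choice_pmf n x) (Bs n x y t)"

lemma q_S: "q n x y S = (if adj n x y then 1 else 0)"
  by (simp add: q_def Bs_def)

lemma q_W: "q n x y W \<le> pmf (choice_pmf n x) y"
  by (simp add: q_def Bs_def measure_pmf_single)

lemma q_nonneg: "0 \<le> q n x y t" by (simp add: q_def)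
lemma q_le1: "q n x y t \<le> 1" by (simp add: q_def)




lemma cyl:
  assumes "finite A" "u \<in> A" "a \<in> A" "b \<in> A" "u \<noteq> a" "u \<noteq> b" "a \<noteq> b"
  shows "measure_pmf.prob (Pi_pmf A d p) {c. c u \<in> B1 \<and> c a \<in> B2 \<and> c b \<in> B3}
     = measure_pmf.prob (p u) B1 * measure_pmf.prob (p a) B2 * measure_pmf.prob (p b) B3"
proof -
  define Bf where "Bf x = (if x = u then B1 else if x = a then B2 else if x = b then B3 else UNIV)" for x
  have Bu: "Bf u = B1" "Bf a = B2" "Bf b = B3" using assms(5-7) by (simp_all add: Bf_def)
  have Bo: "Bf x = UNIV" if "x \<notin> {u,a,b}" for x using that by (simp add: Bf_def)
  have "{c. c u \<in> B1 \<and> c a \<in> B2 \<and> c b \<in> B3} = Pi A Bf"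
  proof (intro set_eqI iffI)
    fix c assume c: "c \<in> {c. c u \<in> B1 \<and> c a \<in> B2 \<and> c b \<in> B3}"
    show "c \<in> Pi A Bf"
    proof (rule Pi_I)
      fix x assume "x \<in> A"
      show "c x \<in> Bf x"
      proof (cases "x \<in> {u,a,b}")
        case True then show ?thesis using c Bu by auto
      next
        case False then show ?thesis using Bo by simp
      qed
    qed
  next
    fix c assume "c \<in> Pi A Bf"
    then have "c u \<in> Bf u" "c a \<in> Bf a" "c b \<in> Bf b" using assms(2-4) by (auto dest: Pi_mem)
    then show "c \<in> {c. c u \<in> B1 \<and> c a \<in> B2 \<and> c b \<in> B3}" using Bu by simp
  qed
  then have "measure_pmf.prob (Pi_pmf A d p) {c. c u \<in> B1 \<and> c a \<in> B2 \<and> c b \<in> B3}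
      = (\<Prod>x\<in>A. measure_pmf.prob (p x) (Bf x))"
    using measure_Pi_pmf_Pi[OF assms(1)] by simp
  also have "\<dots> = (\<Prod>x\<in>{u,a,b}. measure_pmf.prob (p x) (Bf x))"
  proof (rule prod.mono_neutral_right)
    show "finite A" by (rule assms(1))
    show "{u,a,b} \<subseteq> A" using assms(2-4) by simp
    show "\<forall>i\<in>A - {u,a,b}. measure_pmf.prob (p i) (Bf i) = 1"
      using Bo by simp
  qed
  also have "\<dots> = measure_pmf.prob (p u) B1 * measure_pmf.prob (p a) B2 * measure_pmf.prob (p b) B3"
    using assms(5-7) by (simp add: Bu mult.assoc)
  finally show ?thesis .
qed




lemma card_adj: "card {y \<in> Vn n. adj n x y} \<le> 27"
proof -
  obtain x1 x2 x3 where x: "x = (x1,x2,x3)" by (cases x) auto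
  define box where "box = {-1..1::int} \<times> {-1..1::int} \<times> {-1..1::int}"
  define f where "f = (\<lambda>(i,j,k). (x1 + i, x2 + j, x3 + k))"
  have sub: "{y \<in> Vn n. adj n x y} \<subseteq> f ` box"
  proof
    fix y assume "y \<in> {y \<in> Vn n. adj n x y}"
    then have a: "adj n x y" by simp
    obtain y1 y2 y3 where y: "y = (y1,y2,y3)" by (cases y) auto
    have "\<bar>x1 - y1\<bar> \<le> 1" "\<bar>x2 - y2\<bar> \<le> 1" "\<bar>x3 - y3\<bar> \<le> 1"
      using a unfolding adj_def x y by simp_all
    then have "y1 - x1 \<in> {-1..1}" "y2 - x2 \<in> {-1..1}" "y3 - x3 \<in> {-1..1}" by (auto simp: abs_le_iff)
    then have "(y1 - x1, y2 - x2, y3 - x3) \<in> box" unfolding box_def by simp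
    moreover have "y = f (y1 - x1, y2 - x2, y3 - x3)" unfolding f_def y by simp
    ultimately show "y \<in> f ` box" by blast
  qed
  have fb: "finite box" by (simp add: box_def)
  have "card {y \<in> Vn n. adj n x y} \<le> card (f ` box)"
    by (rule card_mono[OF finite_imageI[OF fb] sub])
  also have "\<dots> \<le> card box" by (rule card_image_le[OF fb])
  also have "card box = 27" by (simp add: box_def card_cartesian_product)
  finally show ?thesis .
qed

lemma adj_sym: "adj n x y = adj n y x"
  by (auto simp: adj_def abs_minus_commute)

lemma sumS: "(\<Sum>y\<in>Vn n. q n x y S) \<le> 27"
proof -
  have "(\<Sum>y\<in>Vn n. q n x y S) = real (card {y \<in> Vn n. adj n x y})"
    by (simp add: q_S sum.If_cases finite_Vn Int_def conj_commute)
  then show ?thesis using card_adj[of n x] by simp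
qed

lemma sumS': "(\<Sum>y\<in>Vn n. q n y x S) \<le> 27"
  using sumS[of n x] by (simp add: q_S adj_sym)

lemma qsum:
  assumes "n \<ge> 1" "x \<in> Vn n"
  shows "(\<Sum>y\<in>Vn n. q n x y t) \<le> 27"
proof (cases t)
  case S then show ?thesis using sumS by simp
next
  case W
  have "(\<Sum>y\<in>Vn n. q n x y t) \<le> (\<Sum>y\<in>Vn n. pmf (choice_pmf n x) y)"
    by (intro sum_mono) (simp add: W q_W)
  also have "\<dots> \<le> 1" by (rule sum_pmf_le1[OF finite_Vn])
  finally show ?thesis by simp
qed

lemma qW: "n \<ge> 1 \<Longrightarrow> x \<in> Vn n \<Longrightarrow> q n x y W \<le> Zm n"
  using q_W pmf_le_Zm order_trans by blast

lemma Zm_nonneg: "n \<ge> 1 \<Longrightarrow> 0 \<le> Zm n"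
  unfolding Zm_def by (intro divide_nonneg_nonneg ln_ge_zero) auto

lemma dbl:
  fixes f :: "'a \<Rightarrow> real" and g :: "'a \<Rightarrow> 'b \<Rightarrow> real"
  assumes f0: "\<And>a. a \<in> A \<Longrightarrow> 0 \<le> f a" and fs: "(\<Sum>a\<in>A. f a) \<le> 27"
    and gs: "\<And>a. a \<in> A \<Longrightarrow> (\<Sum>b\<in>B. g a b) \<le> 27" and Z: "0 \<le> Z"
  shows "(\<Sum>a\<in>A. \<Sum>b\<in>B. f a * g a b * Z) \<le> 729 * Z"
proof -
  have "(\<Sum>a\<in>A. \<Sum>b\<in>B. f a * g a b * Z) = (\<Sum>a\<in>A. f a * (\<Sum>b\<in>B. g a b) * Z)"
    by (intro sum.cong refl) (simp add: sum_distrib_left sum_distrib_right)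
  also have "\<dots> \<le> (\<Sum>a\<in>A. f a * 27 * Z)"
  proof (rule sum_mono)
    fix a assume a: "a \<in> A"
    show "f a * (\<Sum>b\<in>B. g a b) * Z \<le> f a * 27 * Z"
      by (rule mult_right_mono[OF mult_left_mono[OF gs[OF a] f0[OF a]] Z])
  qed
  also have "\<dots> = (\<Sum>a\<in>A. f a) * (27 * Z)" by (simp add: sum_distrib_right mult.assoc)
  also have "\<dots> \<le> 27 * (27 * Z)" by (rule mult_right_mono[OF fs]) (use Z in simp)
  finally show ?thesis by simp
qed

lemma type_bound:
  assumes n: "n \<ge> 1" and u: "u \<in> Vn n" and t: "W \<in> {t1,t2,t3}"
  shows "(\<Sum>a\<in>Vn n. \<Sum>b\<in>Vn n. q n u a t1 * q n a b t2 * q n b u t3) \<le> 729 * Zm n"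
proof -
  let ?V = "Vn n"
  note qn = q_nonneg
  have Z: "0 \<le> Zm n" using Zm_nonneg[OF n] .
  consider "t3 = W" | "t3 = S" "t2 = W" | "t3 = S" "t2 = S" "t1 = W"
    using t by (cases t1; cases t2; cases t3) auto
  then show ?thesis
  proof cases
    case 1
    have "(\<Sum>a\<in>?V. \<Sum>b\<in>?V. q n u a t1 * q n a b t2 * q n b u t3)
        \<le> (\<Sum>a\<in>?V. \<Sum>b\<in>?V. q n u a t1 * q n a b t2 * Zm n)"
    proof (intro sum_mono)
      fix a b assume "b \<in> ?V"
      then have "q n b u t3 \<le> Zm n" unfolding 1 by (rule qW[OF n])
      then show "q n u a t1 * q n a b t2 * q n b u t3 \<le> q n u a t1 * q n a b t2 * Zm n"
        by (rule mult_left_mono) (simp add: qn)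
    qed
    also have "\<dots> \<le> 729 * Zm n"
      by (rule dbl[OF qn qsum[OF n u] qsum[OF n] Z])
    finally show ?thesis .
  next
    case 2
    have "(\<Sum>a\<in>?V. \<Sum>b\<in>?V. q n u a t1 * q n a b t2 * q n b u t3)
        \<le> (\<Sum>a\<in>?V. \<Sum>b\<in>?V. q n u a t1 * q n b u S * Zm n)"
    proof (intro sum_mono)
      fix a b assume "a \<in> ?V"
      then have "q n a b t2 \<le> Zm n" unfolding 2 by (rule qW[OF n])
      then have "q n u a t1 * q n a b t2 * q n b u S \<le> q n u a t1 * Zm n * q n b u S"
        by (intro mult_right_mono mult_left_mono qn)
      then show "q n u a t1 * q n a b t2 * q n b u t3 \<le> q n u a t1 * q n b u S * Zm n"
        unfolding 2 by (simp add: mult_ac)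
    qed
    also have "\<dots> \<le> 729 * Zm n"
      by (rule dbl[OF qn qsum[OF n u] sumS' Z])
    finally show ?thesis .
  next
    case 3
    have "(\<Sum>a\<in>?V. \<Sum>b\<in>?V. q n u a t1 * q n a b t2 * q n b u t3)
        \<le> (\<Sum>a\<in>?V. \<Sum>b\<in>?V. q n b u S * q n a b S * Zm n)"
    proof (intro sum_mono)
      fix a b
      have "q n u a t1 \<le> Zm n" unfolding 3 by (rule qW[OF n u])
      then have "q n u a t1 * (q n a b S * q n b u S) \<le> Zm n * (q n a b S * q n b u S)"
        by (intro mult_right_mono mult_nonneg_nonneg qn)
      then show "q n u a t1 * q n a b t2 * q n b u t3 \<le> q n b u S * q n a b S * Zm n"
        unfolding 3 by (simp add: mult_ac)
    qed
    also have "\<dots> = (\<Sum>b\<in>?V. \<Sum>a\<in>?V. q n b u S * q n a b S * Zm n)"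
      by (rule sum.swap)
    also have "\<dots> \<le> 729 * Zm n"
      by (rule dbl[OF qn sumS' sumS' Z])
    finally show ?thesis .
  qed
qed

lemma Zm_le: assumes "n \<ge> 9" shows "Zm n \<le> 2 / ln (real n)"
proof -
  have "ln 9 \<le> ln (real n)" using assms by (intro ln_mono) auto
  moreover have "ln (9::real) = 2 * ln 3"
    using ln_realpow[of 3 2] by simp
  moreover have "ln (real n / 3) = ln (real n) - ln 3" using assms by (simp add: ln_div)
  moreover have "ln (real n / 3) \<le> ln (real n / 3 + 1)" using assms by (intro ln_mono) auto
  moreover have "0 < ln (3::real)" by simp
  ultimately have h: "ln (real n) / 2 \<le> ln (real n / 3 + 1)" "0 < ln (real n)" by linarith+
  then have "1 / ln (real n / 3 + 1) \<le> 1 / (ln (real n) / 2)"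
    by (intro divide_left_mono mult_pos_pos) linarith+
  then show ?thesis by (simp add: Zm_def)
qed

definition Tset :: "(etype \<times> etype \<times> etype) set" where
  "Tset = {S,W} \<times> {S,W} \<times> {S,W}"

lemma etype_SW: "x \<in> {S,W}" by (cases x) simp_all

lemma Tset_all: "t \<in> Tset"
proof -
  obtain a b c where t: "t = (a,b,c)" by (cases t) auto
  show ?thesis unfolding Tset_def t using etype_SW[of a] etype_SW[of b] etype_SW[of c] by blast
qed

lemma finite_Tset: "finite Tset" by (simp add: Tset_def)
lemma card_Tset: "card Tset = 8" by (simp add: Tset_def card_cartesian_product)

definition Ev :: "nat \<Rightarrow> vtx \<Rightarrow> vtx \<times> vtx \<times> etype \<times> etype \<times> etype \<Rightarrow> (vtx \<Rightarrow> vtx) set" where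
  "Ev n u = (\<lambda>(a,b,t1,t2,t3). {c. u \<noteq> a \<and> u \<noteq> b \<and> a \<noteq> b \<and> W \<in> {t1,t2,t3} \<and>
     c u \<in> Bs n u a t1 \<and> c a \<in> Bs n a b t2 \<and> c b \<in> Bs n b u t3})"

definition Qb :: "nat \<Rightarrow> vtx \<Rightarrow> vtx \<times> vtx \<times> etype \<times> etype \<times> etype \<Rightarrow> real" where
  "Qb n u = (\<lambda>(a,b,t1,t2,t3). if W \<in> {t1,t2,t3} then q n u a t1 * q n a b t2 * q n b u t3 else 0)"

lemma E_sub: "E_ev n u \<subseteq> (\<Union>i\<in>Vn n \<times> Vn n \<times> Tset. Ev n u i)"
proof
  fix c assume "c \<in> E_ev n u"
  then obtain a b t1 t2 t3 where h: "a \<in> Vn n" "b \<in> Vn n" "u \<noteq> a" "u \<noteq> b" "a \<noteq> b"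
     "W \<in> {t1, t2, t3}" "of_type n c u a t1" "of_type n c a b t2" "of_type n c b u t3"
    unfolding E_ev_def by blast
  have "c \<in> Ev n u (a,b,t1,t2,t3)" using h by (simp add: Ev_def of_type_Bs)
  moreover have "(a,b,t1,t2,t3) \<in> Vn n \<times> Vn n \<times> Tset" using h Tset_all by auto
  ultimately show "c \<in> (\<Union>i\<in>Vn n \<times> Vn n \<times> Tset. Ev n u i)" by blast
qed

lemma Ev_eq: "Ev n u (a,b,t1,t2,t3) = (if u \<noteq> a \<and> u \<noteq> b \<and> a \<noteq> b \<and> W \<in> {t1,t2,t3}
   then {c. c u \<in> Bs n u a t1 \<and> c a \<in> Bs n a b t2 \<and> c b \<in> Bs n b u t3} else {})"
  unfolding Ev_def by auto

lemma Ev_le: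
  assumes "u \<in> Vn n" "i \<in> Vn n \<times> Vn n \<times> Tset"
  shows "measure_pmf.prob (OSW n) (Ev n u i) \<le> Qb n u i"
proof -
  obtain a b t1 t2 t3 where i: "i = (a,b,t1,t2,t3)" by (cases i) auto
  have ab: "a \<in> Vn n" "b \<in> Vn n" using assms(2) i by auto
  show ?thesis
  proof (cases "u \<noteq> a \<and> u \<noteq> b \<and> a \<noteq> b \<and> W \<in> {t1,t2,t3}")
    case True
    then have e: "Ev n u i = {c. c u \<in> Bs n u a t1 \<and> c a \<in> Bs n a b t2 \<and> c b \<in> Bs n b u t3}"
      unfolding i Ev_eq by (rule if_P)
    have "measure_pmf.prob (Pi_pmf (Vn n) (0,0,0) (choice_pmf n))
        {c. c u \<in> Bs n u a t1 \<and> c a \<in> Bs n a b t2 \<and> c b \<in> Bs n b u t3}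
       = q n u a t1 * q n a b t2 * q n b u t3"
      unfolding q_def by (rule cyl[OF finite_Vn]) (use True ab assms(1) in auto)
    then have "measure_pmf.prob (OSW n) (Ev n u i) = q n u a t1 * q n a b t2 * q n b u t3"
      unfolding OSW_def e .
    moreover have "Qb n u i = q n u a t1 * q n a b t2 * q n b u t3"
      using True unfolding i Qb_def by simp
    ultimately show ?thesis by simp
  next
    case False
    then have "Ev n u i = {}" unfolding i Ev_eq by (rule if_not_P)
    moreover have "0 \<le> Qb n u i" by (simp add: Qb_def i q_nonneg)
    ultimately show ?thesis by simp
  qed
qed

lemma type_bound_all:
  assumes n: "n \<ge> 1" and u: "u \<in> Vn n"
  shows "(\<Sum>a\<in>Vn n. \<Sum>b\<in>Vn n. Qb n u (a,b,t1,t2,t3)) \<le> 729 * Zm n"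
proof (cases "W \<in> {t1,t2,t3}")
  case True
  then show ?thesis using type_bound[OF n u True] by (simp add: Qb_def)
next
  case False
  then show ?thesis using Zm_nonneg[OF n] by (simp add: Qb_def)
qed

lemma main_bound:
  assumes n: "n \<ge> 1" and u: "u \<in> Vn n"
  shows "measure_pmf.prob (OSW n) (E_ev n u) \<le> 5832 * Zm n"
proof -
  let ?I = "Vn n \<times> Vn n \<times> Tset"
  have fin: "finite ?I" by (simp add: finite_Vn finite_Tset)
  have "measure_pmf.prob (OSW n) (E_ev n u) \<le> measure_pmf.prob (OSW n) (\<Union>i\<in>?I. Ev n u i)"
    by (rule measure_pmf.finite_measure_mono[OF E_sub]) simp
  also have "\<dots> \<le> (\<Sum>i\<in>?I. measure_pmf.prob (OSW n) (Ev n u i))"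
    by (rule measure_pmf.finite_measure_subadditive_finite[OF fin]) auto
  also have "\<dots> \<le> (\<Sum>i\<in>?I. Qb n u i)"
    by (intro sum_mono Ev_le u)
  also have "\<dots> = (\<Sum>a\<in>Vn n. \<Sum>p\<in>Vn n \<times> Tset. Qb n u (a,p))"
    by (rule sum.cartesian_product[symmetric, where g="\<lambda>a p. Qb n u (a,p)", unfolded split_def prod.collapse])
  also have "\<dots> = (\<Sum>a\<in>Vn n. \<Sum>b\<in>Vn n. \<Sum>t\<in>Tset. Qb n u (a,b,t))"
  proof (rule sum.cong[OF refl])
    fix a show "(\<Sum>p\<in>Vn n \<times> Tset. Qb n u (a,p)) = (\<Sum>b\<in>Vn n. \<Sum>t\<in>Tset. Qb n u (a,b,t))"
      by (rule sum.cartesian_product[symmetric, where g="\<lambda>b t. Qb n u (a,b,t)", unfolded split_def prod.collapse])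
  qed
  also have "\<dots> = (\<Sum>a\<in>Vn n. \<Sum>t\<in>Tset. \<Sum>b\<in>Vn n. Qb n u (a,b,t))"
    by (rule sum.cong[OF refl]) (rule sum.swap)
  also have "\<dots> = (\<Sum>t\<in>Tset. \<Sum>a\<in>Vn n. \<Sum>b\<in>Vn n. Qb n u (a,b,t))"
    by (rule sum.swap)
  also have "\<dots> \<le> (\<Sum>t\<in>Tset. 729 * Zm n)"
  proof (rule sum_mono)
    fix t assume "t \<in> Tset"
    obtain t1 t2 t3 where t: "t = (t1,t2,t3)" by (cases t) auto
    show "(\<Sum>a\<in>Vn n. \<Sum>b\<in>Vn n. Qb n u (a,b,t)) \<le> 729 * Zm n"
      unfolding t by (rule type_bound_all[OF n u])
  qed
  also have "\<dots> = 5832 * Zm n" by (simp add: card_Tset)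
  finally show ?thesis .
qed

theorem theorem3:
  shows "\<exists>C N. \<forall>n\<ge>N. \<forall>u\<in>Vn n.
           measure_pmf.prob (OSW n) (E_ev n u) \<le> C / ln (real n)"
proof (intro exI allI impI ballI)
  fix n u assume n: "(9::nat) \<le> n" and u: "u \<in> Vn n"
  have "measure_pmf.prob (OSW n) (E_ev n u) \<le> 5832 * Zm n"
    using n u by (intro main_bound) auto
  also have "\<dots> \<le> 5832 * (2 / ln (real n))"
    using Zm_le[OF n] by simp
  finally show "measure_pmf.prob (OSW n) (E_ev n u) \<le> 11664 / ln (real n)" by simp
qed


end
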